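(* If $p\in\mathbb{N}$ is odd, then there does not exist a UPB in $(\mathbb{C}^2)^{\otimes p}$ consisting of exactly $p+2$ states.
   Context: A product state in $(\mathbb{C}^2)^{\otimes p}$ is a vector $|v_1\rangle\otimes\cdots\otimes|v_p\rangle$ with each $|v_j\rangle\in\mathbb{C}^2$. A $p$-qubit unextendible product basis (UPB) is a finite set $\mathcal{S}\subseteq(\mathbb{C}^2)^{\otimes p}$ of unit product vectors that are pairwise orthogonal, such that no nonzero product vector outside $\mathcal{S}$ is orthogonal to every element of $\mathcal{S}$. The size (number of states) of a UPB is its number of elements. *)

theory Defs
  imports Complex_Main
begin

text \<open>The space (C^2)^{tensor p} is modelled as complex-valued functions on the
computational basis, i.e. on bit strings of length p, encoded as functions
nat => bool that are False outside {0..<p}.  Values outside the basis are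
irrelevant (the inner product only sums over the basis).\<close>

definition bitstrings :: "nat \<Rightarrow> (nat \<Rightarrow> bool) set" where
  "bitstrings p = {b. \<forall>i\<ge>p. b i = False}"

type_synonym qvec = "(nat \<Rightarrow> bool) \<Rightarrow> complex"

definition qinner :: "nat \<Rightarrow> qvec \<Rightarrow> qvec \<Rightarrow> complex" where
  "qinner p x y = (\<Sum>b\<in>bitstrings p. cnj (x b) * y b)"

definition tensor :: "nat \<Rightarrow> (nat \<Rightarrow> bool \<Rightarrow> complex) \<Rightarrow> qvec" where
  "tensor p v = (\<lambda>b. if b \<in> bitstrings p then (\<Prod>i<p. v i (b i)) else 0)"

definition is_product :: "nat \<Rightarrow> qvec \<Rightarrow> bool" where
  "is_product p x \<longleftrightarrow> (\<exists>v. x = tensor p v)"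

definition is_UPB :: "nat \<Rightarrow> qvec set \<Rightarrow> bool" where
  "is_UPB p S \<longleftrightarrow>
     finite S \<and>
     (\<forall>x\<in>S. is_product p x \<and> qinner p x x = 1) \<and>
     (\<forall>x\<in>S. \<forall>y\<in>S. x \<noteq> y \<longrightarrow> qinner p x y = 0) \<and>
     (\<forall>z. is_product p z \<and> z \<noteq> (\<lambda>_. 0) \<and> z \<notin> S \<longrightarrow> (\<exists>x\<in>S. qinner p x z \<noteq> 0))"

end

theory Submission
  imports Defs
begin


definition lin :: "(bool \<Rightarrow> complex) \<Rightarrow> (bool \<Rightarrow> complex) \<Rightarrow> complex" where
  "lin a b = cnj (a False) * b False + cnj (a True) * b True"
definition nz :: "(bool \<Rightarrow> complex) \<Rightarrow> bool" where
  "nz a \<longleftrightarrow> a False \<noteq> 0 \<or> a True \<noteq> 0"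
definition par :: "(bool \<Rightarrow> complex) \<Rightarrow> (bool \<Rightarrow> complex) \<Rightarrow> bool" where
  "par a b \<longleftrightarrow> a False * b True = a True * b False"
definition perp :: "(bool \<Rightarrow> complex) \<Rightarrow> (bool \<Rightarrow> complex)" where
  "perp a = (\<lambda>t. if t then - cnj (a False) else cnj (a True))"

lemma lin_sym: "lin a b = 0 \<Longrightarrow> lin b a = 0"
proof -
  assume "lin a b = 0"
  hence "cnj (lin a b) = 0" by simp
  thus ?thesis unfolding lin_def by (simp add: mult.commute)
qed

lemma lin_perp: "lin a (perp a) = 0"
  unfolding lin_def perp_def by (simp add: mult.commute)

lemma nz_perp: "nz a \<Longrightarrow> nz (perp a)"
  unfolding nz_def perp_def by auto

lemma par_refl: "par a a" unfolding par_def by (simp add: mult.commute)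
lemma par_sym: "par a b \<Longrightarrow> par b a" unfolding par_def by (simp add: mult.commute)

lemma par_trans: "par a b \<Longrightarrow> par b c \<Longrightarrow> nz b \<Longrightarrow> par a c"
  unfolding par_def nz_def
proof -
  assume h1: "a False * b True = a True * b False" and h2: "b False * c True = b True * c False"
    and n: "b False \<noteq> 0 \<or> b True \<noteq> 0"
  have "(a False * c True - a True * c False) * b False = 0"
    using h1 h2 by algebra
  moreover have "(a False * c True - a True * c False) * b True = 0"
    using h1 h2 by algebra
  ultimately show "a False * c True = a True * c False" using n by auto
qed

lemma par_lin: "par a b \<Longrightarrow> lin b c = 0 \<Longrightarrow> nz b \<Longrightarrow> lin a c = 0"
  unfolding par_def nz_def lin_def
proof -
  assume h1: "a False * b True = a True * b False" and h2: "cnj (b False) * c False + cnj (b True) * c True = 0"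
    and n: "b False \<noteq> 0 \<or> b True \<noteq> 0"
  have h1': "cnj (a False) * cnj (b True) = cnj (a True) * cnj (b False)"
    using arg_cong[OF h1, of cnj] by simp
  have "(cnj (a False) * c False + cnj (a True) * c True) * cnj (b False) = 0"
    using h1' h2 by algebra
  moreover have "(cnj (a False) * c False + cnj (a True) * c True) * cnj (b True) = 0"
    using h1' h2 by algebra
  ultimately show "cnj (a False) * c False + cnj (a True) * c True = 0" using n by auto
qed

lemma lin_lin_par: "lin a b = 0 \<Longrightarrow> lin b c = 0 \<Longrightarrow> nz b \<Longrightarrow> par a c"
  unfolding par_def nz_def lin_def
proof -
  assume h1: "cnj (a False) * b False + cnj (a True) * b True = 0" and h2: "cnj (b False) * c False + cnj (b True) * c True = 0"
    and n: "b False \<noteq> 0 \<or> b True \<noteq> 0"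
  have h2': "b False * cnj (c False) + b True * cnj (c True) = 0"
    using arg_cong[OF h2, of cnj] by simp
  have "(cnj (a False) * cnj (c True) - cnj (a True) * cnj (c False)) * b False = 0"
    using h1 h2' by algebra
  moreover have "(cnj (a False) * cnj (c True) - cnj (a True) * cnj (c False)) * b True = 0"
    using h1 h2' by algebra
  ultimately have "cnj (a False) * cnj (c True) = cnj (a True) * cnj (c False)" using n by auto
  hence "cnj (a False * c True) = cnj (a True * c False)" by simp
  thus "a False * c True = a True * c False" using complex_cnj_cancel_iff by blast
qed

lemma lin_self: "nz a \<Longrightarrow> lin a a \<noteq> 0"
proof
  assume n: "nz a" and h: "lin a a = 0"
  have "lin a a = complex_of_real ((cmod (a False))\<^sup>2 + (cmod (a True))\<^sup>2)"
    unfolding lin_def by (simp add: complex_norm_square[symmetric] mult.commute del: of_real_power)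
  with h have "(cmod (a False))\<^sup>2 + (cmod (a True))\<^sup>2 = 0" by (simp only: of_real_eq_0_iff)
  hence "a False = 0 \<and> a True = 0"
    by (smt (verit, ccfv_SIG) norm_eq_zero power2_less_eq_zero_iff zero_le_power2)
  with n show False unfolding nz_def by auto
qed

lemma lin_par_False: "lin a b = 0 \<Longrightarrow> par a b \<Longrightarrow> nz a \<Longrightarrow> nz b \<Longrightarrow> False"
  using par_lin[of b a b] lin_self[of b] par_sym by blast




lemma bitstrings_0: "bitstrings 0 = {\<lambda>_. False}"
  unfolding bitstrings_def by auto

lemma bitstrings_Suc: "bitstrings (Suc p) = (\<lambda>(b,t). b(p:=t)) ` (bitstrings p \<times> UNIV)"
proof
  show "bitstrings (Suc p) \<subseteq> (\<lambda>(b,t). b(p:=t)) ` (bitstrings p \<times> UNIV)"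
  proof
    fix b assume b: "b \<in> bitstrings (Suc p)"
    have "b = (\<lambda>(b,t). b(p:=t)) (b(p:=False), b p)" by auto
    moreover have "(b(p:=False), b p) \<in> bitstrings p \<times> UNIV"
      using b unfolding bitstrings_def by auto
    ultimately show "b \<in> (\<lambda>(b,t). b(p:=t)) ` (bitstrings p \<times> UNIV)" by blast
  qed
  show "(\<lambda>(b,t). b(p:=t)) ` (bitstrings p \<times> UNIV) \<subseteq> bitstrings (Suc p)"
    unfolding bitstrings_def by auto
qed

lemma bitstrings_inj: "inj_on (\<lambda>(b,t). b(p:=t)) (bitstrings p \<times> UNIV)"
proof (rule inj_onI, clarify)
  fix b t b' t'
  assume b: "b \<in> bitstrings p" and b': "b' \<in> bitstrings p" and e: "b(p := t) = b'(p := t')"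
  have "t = t'" using fun_cong[OF e, of p] by simp
  moreover have "b = b'"
  proof
    fix i show "b i = b' i"
      using fun_cong[OF e, of i] b b' unfolding bitstrings_def by (cases "i = p") auto
  qed
  ultimately show "b = b' \<and> t = t'" by simp
qed

lemma finite_bitstrings: "finite (bitstrings p)"
  by (induction p) (auto simp: bitstrings_0 bitstrings_Suc)

lemma sum_prod_bits:
  fixes f :: "nat \<Rightarrow> bool \<Rightarrow> complex"
  shows "(\<Sum>b\<in>bitstrings p. \<Prod>i<p. f i (b i)) = (\<Prod>i<p. f i False + f i True)"
proof (induction p)
  case 0
  then show ?case by (simp add: bitstrings_0)
next
  case (Suc p)
  have "(\<Sum>b\<in>bitstrings (Suc p). \<Prod>i<Suc p. f i (b i))
      = (\<Sum>x\<in>bitstrings p \<times> UNIV. (\<lambda>b. \<Prod>i<Suc p. f i (b i)) ((\<lambda>(b,t). b(p:=t)) x))"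
    unfolding bitstrings_Suc sum.reindex[OF bitstrings_inj] comp_def by (rule refl)
  also have "\<dots> = (\<Sum>x\<in>bitstrings p \<times> UNIV. (\<Prod>i<p. f i (fst x i)) * f p (snd x))"
  proof (rule sum.cong[OF refl], clarify)
    fix b t assume "b \<in> bitstrings p"
    have "(\<Prod>i<p. f i ((b(p:=t)) i)) = (\<Prod>i<p. f i (b i))"
      by (rule prod.cong) auto
    thus "(\<Prod>i<Suc p. f i ((b(p:=t)) i)) = (\<Prod>i<p. f i (fst (b,t) i)) * f p (snd (b,t))"
      by simp
  qed
  also have "\<dots> = (\<Sum>b\<in>bitstrings p. \<Sum>t\<in>UNIV. (\<Prod>i<p. f i (b i)) * f p t)"
    by (simp add: sum.cartesian_product case_prod_beta)
  also have "\<dots> = (\<Sum>b\<in>bitstrings p. (\<Prod>i<p. f i (b i))) * (f p False + f p True)"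
    by (simp add: UNIV_bool sum_distrib_right distrib_left sum.distrib)
  also have "\<dots> = (\<Prod>i<Suc p. f i False + f i True)"
    using Suc by simp
  finally show ?case .
qed

lemma qinner_tensor: "qinner p (tensor p v) (tensor p w) = (\<Prod>i<p. lin (v i) (w i))"
proof -
  have "qinner p (tensor p v) (tensor p w) = (\<Sum>b\<in>bitstrings p. \<Prod>i<p. cnj (v i (b i)) * w i (b i))"
    unfolding qinner_def tensor_def by (intro sum.cong refl) (simp add: prod.distrib)
  also have "\<dots> = (\<Prod>i<p. lin (v i) (w i))"
    by (subst sum_prod_bits) (simp add: lin_def)
  finally show ?thesis .
qed

lemma tensor_nonzero:
  assumes "\<And>k. k < p \<Longrightarrow> nz (w k)"
  shows "tensor p w \<noteq> (\<lambda>_. 0)"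
proof
  assume h: "tensor p w = (\<lambda>_. 0)"
  define b0 where "b0 = (\<lambda>i. i < p \<and> w i True \<noteq> 0)"
  have b0: "b0 \<in> bitstrings p" unfolding b0_def bitstrings_def by auto
  have "w i (b0 i) \<noteq> 0" if "i < p" for i
  proof (cases "w i True = 0")
    case True thus ?thesis using assms[OF that] that unfolding b0_def nz_def by auto
  next
    case False thus ?thesis using that unfolding b0_def by auto
  qed
  hence "tensor p w b0 \<noteq> 0" using b0 unfolding tensor_def by simp
  with h show False by simp
qed




lemma even_invol:
  "finite A \<Longrightarrow> (\<forall>x\<in>A. f x \<in> A \<and> f x \<noteq> x \<and> f (f x) = x) \<Longrightarrow> even (card A)"
proof (induction "card A" arbitrary: A rule: less_induct)
  case less
  show ?case
  proof (cases "A = {}")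
    case True thus ?thesis by simp
  next
    case False
    then obtain x where x: "x \<in> A" by blast
    define A' where "A' = A - {x, f x}"
    have fx: "f x \<in> A" "f x \<noteq> x" using less.prems x by auto
    have cA': "card A' = card A - 2" unfolding A'_def using fx x less.prems(1)
      by (subst card_Diff_subset) auto
    have ge: "card A \<ge> 2"
    proof -
      have "card {x, f x} \<le> card A" using fx x less.prems(1) by (intro card_mono) auto
      thus ?thesis using fx by simp
    qed
    have "even (card A')"
    proof (rule less.hyps)
      show "card A' < card A" using cA' ge by simp
      show "finite A'" unfolding A'_def using less.prems by simp
      show "\<forall>y\<in>A'. f y \<in> A' \<and> f y \<noteq> y \<and> f (f y) = y"
      proof
        fix y assume y: "y \<in> A'"
        have fy: "f y \<in> A" "f y \<noteq> y" "f (f y) = y" using less.prems(2) y unfolding A'_def by auto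
        have "f y \<noteq> x" using y fx less.prems(2) x unfolding A'_def by force
        moreover have "f y \<noteq> f x" using y fy less.prems(2) x unfolding A'_def by force
        ultimately show "f y \<in> A' \<and> f y \<noteq> y \<and> f (f y) = y" using fy unfolding A'_def by auto
      qed
    qed
    moreover have "card A = card A' + 2" using cA' ge by simp
    ultimately show ?thesis by simp
  qed
qed

locale upbd =
  fixes S :: "'a set" and p :: nat and U :: "'a \<Rightarrow> nat \<Rightarrow> bool \<Rightarrow> complex"
  assumes fin: "finite S" and cardS: "card S = p + 2" and oddp: "odd p"
  and nzU: "\<And>x k. x \<in> S \<Longrightarrow> k < p \<Longrightarrow> nz (U x k)"
  and orthU: "\<And>x y. x \<in> S \<Longrightarrow> y \<in> S \<Longrightarrow> x \<noteq> y \<Longrightarrow> \<exists>k<p. lin (U x k) (U y k) = 0"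
  and extU: "\<And>w. (\<And>k. k < p \<Longrightarrow> nz (w k)) \<Longrightarrow> (\<And>x. x \<in> S \<Longrightarrow> \<exists>k<p. lin (U x k) (w k) = 0) \<Longrightarrow> False"
begin

definition ort where "ort k x y \<longleftrightarrow> lin (U x k) (U y k) = 0"
definition pr where "pr k x y \<longleftrightarrow> par (U x k) (U y k)"
definition sing where "sing k x \<longleftrightarrow> (\<forall>y\<in>S. pr k x y \<longrightarrow> y = x)"

lemma ort_sym: "ort k x y \<Longrightarrow> ort k y x" unfolding ort_def by (rule lin_sym)
lemma pr_refl: "pr k x x" unfolding pr_def by (rule par_refl)
lemma pr_sym: "pr k x y \<Longrightarrow> pr k y x" unfolding pr_def by (rule par_sym)
lemma pr_trans: "pr k x y \<Longrightarrow> pr k y z \<Longrightarrow> y \<in> S \<Longrightarrow> k < p \<Longrightarrow> pr k x z"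
  unfolding pr_def using par_trans nzU by blast
lemma ort_ort_pr: "ort k x y \<Longrightarrow> ort k y z \<Longrightarrow> y \<in> S \<Longrightarrow> k < p \<Longrightarrow> pr k x z"
  unfolding pr_def ort_def using lin_lin_par nzU by blast
lemma pr_ort: "pr k x y \<Longrightarrow> ort k y z \<Longrightarrow> y \<in> S \<Longrightarrow> k < p \<Longrightarrow> ort k x z"
  unfolding pr_def ort_def using par_lin nzU by blast
lemma ort_pr_False: "ort k x y \<Longrightarrow> pr k x y \<Longrightarrow> x \<in> S \<Longrightarrow> y \<in> S \<Longrightarrow> k < p \<Longrightarrow> False"
  unfolding pr_def ort_def using lin_par_False nzU by blast
lemma ort_irrefl: "ort k x x \<Longrightarrow> x \<in> S \<Longrightarrow> k < p \<Longrightarrow> False"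
  using ort_pr_False pr_refl by blast

lemma cover:
  assumes c: "\<forall>k<p. c k \<in> S" and cov: "\<forall>x\<in>S. \<exists>k<p. pr k x (c k)"
  shows False
proof (rule extU[of "\<lambda>k. perp (U (c k) k)"])
  fix k assume "k < p" thus "nz (perp (U (c k) k))" using c nzU nz_perp by blast
next
  fix x assume "x \<in> S"
  then obtain k where k: "k < p" "pr k x (c k)" using cov by blast
  have "lin (U x k) (perp (U (c k) k)) = 0"
    using par_lin[OF k(2)[unfolded pr_def] lin_perp nzU] c k(1) by blast
  thus "\<exists>k<p. lin (U x k) (perp (U (c k) k)) = 0" using k(1) by blast
qed

lemma S_ne: "S \<noteq> {}" using cardS by auto

lemma cover_gen:
  assumes A: "A \<subseteq> S" and K: "K \<subseteq> {..<p}" and c0: "\<forall>k\<in>K. c0 k \<in> S"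
    and cov: "\<forall>x\<in>A. \<exists>k\<in>K. pr k x (c0 k)" and card: "card (S - A) \<le> card ({..<p} - K)"
  shows False
proof -
  obtain h where h: "h ` (S - A) \<subseteq> {..<p} - K" "inj_on h (S - A)"
    using card_le_inj[OF _ _ card] fin by auto
  obtain s0 where s0: "s0 \<in> S" using S_ne by blast
  define c where "c k = (if k \<in> K then c0 k else if k \<in> h ` (S - A) then inv_into (S - A) h k else s0)" for k
  show False
  proof (rule cover[of c])
    show "\<forall>k<p. c k \<in> S"
    proof (intro allI impI)
      fix k assume "k < p"
      show "c k \<in> S" unfolding c_def using c0 s0 inv_into_into[of k h "S - A"] by auto
    qed
    show "\<forall>x\<in>S. \<exists>k<p. pr k x (c k)"
    proof
      fix x assume x: "x \<in> S"
      show "\<exists>k<p. pr k x (c k)"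
      proof (cases "x \<in> A")
        case True
        then obtain k where "k \<in> K" "pr k x (c0 k)" using cov by blast
        thus ?thesis using K unfolding c_def by auto
      next
        case False
        hence xa: "x \<in> S - A" using x by simp
        hence "h x \<in> {..<p} - K" using h by blast
        moreover have "c (h x) = x" using xa h unfolding c_def by (auto simp: inv_into_f_f)
        ultimately show ?thesis using pr_refl by (metis Diff_iff lessThan_iff)
      qed
    qed
  qed
qed

lemma partner: assumes x: "x \<in> S" and k: "k < p" shows "\<exists>y\<in>S. ort k x y"
proof (rule ccontr)
  assume no: "\<not> (\<exists>y\<in>S. ort k x y)"
  define w where "w = (U x)(k := perp (U x k))"
  show False
  proof (rule extU[of w])
    fix k' assume k': "k' < p"
    show "nz (w k')"
    proof (cases "k' = k")
      case True thus ?thesis unfolding w_def using nzU[OF x k] nz_perp by simp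
    next
      case False thus ?thesis unfolding w_def using nzU[OF x k'] by simp
    qed
  next
    fix y assume y: "y \<in> S"
    show "\<exists>k'<p. lin (U y k') (w k') = 0"
    proof (cases "y = x")
      case True
      have "lin (U y k) (w k) = 0" unfolding w_def True by (simp add: lin_perp)
      thus ?thesis using k by blast
    next
      case False
      then obtain k' where k': "k' < p" "lin (U y k') (U x k') = 0" using orthU[OF y x] by blast
      have "ort k' x y" unfolding ort_def using lin_sym[OF k'(2)] .
      hence "k' \<noteq> k" using no y by blast
      hence "lin (U y k') (w k') = 0" unfolding w_def using k'(2) by simp
      thus ?thesis using k'(1) by blast
    qed
  qed
qed

lemma no3:
  assumes "x \<in> S" "y \<in> S" "z \<in> S" "j < p" "x \<noteq> y" "y \<noteq> z" "x \<noteq> z" "pr j x y" "pr j y z"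
  shows False
proof (rule cover_gen[of "{x,y,z}" "{j}" "\<lambda>_. y"])
  show "{x, y, z} \<subseteq> S" "{j} \<subseteq> {..<p}" "\<forall>k\<in>{j}. y \<in> S" using assms by auto
  have "pr j z y" using assms(9) by (rule pr_sym)
  thus "\<forall>xa\<in>{x, y, z}. \<exists>k\<in>{j}. pr k xa y" using assms(8) pr_refl by auto
  have "card (S - {x,y,z}) = p - 1" using assms fin cardS by (subst card_Diff_subset) auto
  moreover have "card ({..<p} - {j}) = p - 1" using assms by simp
  ultimately show "card (S - {x, y, z}) \<le> card ({..<p} - {j})" by simp
qed

lemma no_disj:
  assumes "a \<in> S" "b \<in> S" "e \<in> S" "f \<in> S" "j < p" "l < p" "j \<noteq> l" "a \<noteq> b" "e \<noteq> f"
    "pr j a b" "pr l e f" "a \<notin> {e,f}" "b \<notin> {e,f}"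
  shows False
proof (rule cover_gen[of "{a,b,e,f}" "{j,l}" "\<lambda>k. if k = j then a else e"])
  show "{a,b,e,f} \<subseteq> S" "{j,l} \<subseteq> {..<p}" "\<forall>k\<in>{j,l}. (if k = j then a else e) \<in> S" using assms by auto
  have "pr j b a" "pr l f e" using assms(10,11) by (auto intro: pr_sym)
  thus "\<forall>x\<in>{a,b,e,f}. \<exists>k\<in>{j,l}. pr k x (if k = j then a else e)" using assms(7) pr_refl by auto
  have "card {a,b,e,f} = 4" using assms by auto
  hence "card (S - {a,b,e,f}) = p - 2" using assms fin cardS by (subst card_Diff_subset) auto
  moreover have "card ({..<p} - {j,l}) = p - 2" using assms by (subst card_Diff_subset) auto
  ultimately show "card (S - {a,b,e,f}) \<le> card ({..<p} - {j,l})" by simp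
qed

end


context upbd begin

definition Pk where "Pk k = {x\<in>S. sing k x \<and> (\<exists>y\<in>S. ort k x y \<and> sing k y)}"

lemma uniq_partner:
  assumes "x \<in> S" "y \<in> S" "y' \<in> S" "k < p" "ort k x y" "ort k x y'" "sing k y"
  shows "y' = y"
proof -
  have "pr k y y'" using ort_ort_pr[OF ort_sym[OF assms(5)] assms(6) assms(1) assms(4)] .
  thus ?thesis using assms(3,7) unfolding sing_def by blast
qed

lemma even_P: assumes k: "k < p" shows "even (card (Pk k))"
proof -
  define f where "f x = (SOME y. y \<in> S \<and> ort k x y \<and> sing k y)" for x
  have f: "f x \<in> S \<and> ort k x (f x) \<and> sing k (f x)" if "x \<in> Pk k" for x
  proof -
    have "\<exists>y. y \<in> S \<and> ort k x y \<and> sing k y" using that unfolding Pk_def by blast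
    thus ?thesis unfolding f_def by (rule someI_ex)
  qed
  show ?thesis
  proof (rule even_invol[of "Pk k" f])
    show "finite (Pk k)" using fin unfolding Pk_def by simp
    show "\<forall>x\<in>Pk k. f x \<in> Pk k \<and> f x \<noteq> x \<and> f (f x) = x"
    proof
      fix x assume x: "x \<in> Pk k"
      have xS: "x \<in> S" and sx: "sing k x" using x unfolding Pk_def by auto
      have fx: "f x \<in> S" "ort k x (f x)" "sing k (f x)" using f[OF x] by auto
      have fxP: "f x \<in> Pk k" unfolding Pk_def using fx xS sx ort_sym by blast
      have "f x \<noteq> x"
      proof
        assume "f x = x" thus False using fx(2) ort_irrefl[of k x] xS k by simp
      qed
      moreover have "f (f x) = x"
      proof -
        have ff: "f (f x) \<in> S" "ort k (f x) (f (f x))" using f[OF fxP] by auto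
        show ?thesis by (rule uniq_partner[OF fx(1) xS ff(1) k ort_sym[OF fx(2)] ff(2) sx])
      qed
      ultimately show "f x \<in> Pk k \<and> f x \<noteq> x \<and> f (f x) = x" using fxP by blast
    qed
  qed
qed

lemma even_S_False: "even (card S) \<Longrightarrow> False"
  using cardS oddp by simp

lemma has_edge: assumes k: "k < p" shows "\<exists>a\<in>S. \<exists>b\<in>S. a \<noteq> b \<and> pr k a b"
proof (rule ccontr)
  assume no: "\<not> ?thesis"
  have allsing: "sing k x" if "x \<in> S" for x
    unfolding sing_def
  proof (intro ballI impI)
    fix y assume "y \<in> S" "pr k x y"
    thus "y = x" using no that by (metis (no_types))
  qed
  have "Pk k = S"
  proof
    show "Pk k \<subseteq> S" unfolding Pk_def by blast
    show "S \<subseteq> Pk k"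
    proof
      fix x assume x: "x \<in> S"
      obtain y where "y \<in> S" "ort k x y" using partner[OF x k] by blast
      thus "x \<in> Pk k" unfolding Pk_def using x allsing by blast
    qed
  qed
  thus False using even_P[OF k] even_S_False by simp
qed

lemma Q_transfer:
  assumes k: "k < p" and S4: "a \<in> S" "b \<in> S" "c \<in> S" "d \<in> S"
    and pab: "pr k a b" and pcd: "pr k c d" and cd: "c \<noteq> d"
    and singW: "\<forall>g\<in>S - {a,b,c,d}. sing k g"
    and w: "w \<in> S - {a,b,c,d}" and wa: "ort k w a"
  shows "\<exists>w'\<in>S - {a,b,c,d}. ort k w' c"
proof -
  obtain y where y: "y \<in> S" "ort k c y" using partner[OF S4(3) k] by blast
  have sw: "sing k w" using singW w by blast
  have wS: "w \<in> S" "w \<noteq> c" using w by auto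
  show ?thesis
  proof (cases "y \<in> {a,b,c,d}")
    case False
    thus ?thesis using y ort_sym by blast
  next
    case True
    have "y = a \<or> y = b \<or> y = c \<or> y = d" using True by auto
    thus ?thesis
    proof (elim disjE)
      assume ya: "y = a"
      have "ort k a c" using ort_sym[OF y(2)] ya by simp
      hence "pr k w c" using ort_ort_pr[OF wa _ S4(1) k] by simp
      hence "c = w" using sw S4(3) unfolding sing_def by blast
      thus ?thesis using wS by simp
    next
      assume yb: "y = b"
      have "ort k b w" using pr_ort[OF pr_sym[OF pab] ort_sym[OF wa] S4(1) k] .
      moreover have "ort k b c" using ort_sym[OF y(2)] yb by simp
      ultimately have "pr k w c" using ort_ort_pr[OF ort_sym _ S4(2) k] by blast
      hence "c = w" using sw S4(3) unfolding sing_def by blast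
      thus ?thesis using wS by simp
    next
      assume "y = c" thus ?thesis using y ort_irrefl S4 k by blast
    next
      assume "y = d" thus ?thesis using y pcd ort_pr_False S4 k by blast
    qed
  qed
qed

end


context upbd begin

lemma one_edge:
  assumes k: "k < p" and S4: "a \<in> S" "b \<in> S" "c \<in> S" "d \<in> S" and ab: "a \<noteq> b" and cd: "c \<noteq> d"
    and pab: "pr k a b" and pcd: "pr k c d"
  shows "{a,b} = {c,d}"
proof (rule ccontr)
  assume ne: "{a,b} \<noteq> {c,d}"
  have pba: "pr k b a" using pab by (rule pr_sym)
  have pdc: "pr k d c" using pcd by (rule pr_sym)
  have ac: "a \<noteq> c"
  proof
    assume e: "a = c"
    hence "b \<noteq> d" using ne by auto
    thus False using no3[of b a d k] S4 k ab cd e pba pcd by auto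
  qed
  have ad: "a \<noteq> d"
  proof
    assume e: "a = d"
    hence "b \<noteq> c" using ne by auto
    thus False using no3[of b a c k] S4 k ab cd e pba pdc by auto
  qed
  have bc: "b \<noteq> c"
  proof
    assume e: "b = c"
    hence "a \<noteq> d" using ne by auto
    thus False using no3[of a b d k] S4 k ab cd e pab pcd by auto
  qed
  have bd: "b \<noteq> d"
  proof
    assume e: "b = d"
    hence "a \<noteq> c" using ne by auto
    thus False using no3[of a b c k] S4 k ab cd e pab pdc by auto
  qed
  have c4: "card {a,b,c,d} = 4" using ab ac ad bc bd cd by auto
  have "card {a,b,c,d} \<le> card S" using S4 fin by (intro card_mono) auto
  hence "p \<ge> 2" using c4 cardS by simp
  hence p3: "p \<ge> 3" using oddp by presburger
  define l where "l = (if k = 0 then 1 else (0::nat))"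
  have l: "l < p" "l \<noteq> k" unfolding l_def using p3 by auto
  obtain e f where ef: "e \<in> S" "f \<in> S" "e \<noteq> f" "pr l e f" using has_edge[OF l(1)] by blast
  have m1: "\<not> (a \<notin> {e,f} \<and> b \<notin> {e,f})"
    using no_disj[of a b e f k l] S4 ef k l ab pab by auto
  have m2: "\<not> (c \<notin> {e,f} \<and> d \<notin> {e,f})"
    using no_disj[of c d e f k l] S4 ef k l cd pcd by auto
  have efin: "e \<in> {a,b,c,d}" "f \<in> {a,b,c,d}" using m1 m2 ef(3) ac ad bc bd by auto
  define W where "W = S - {a,b,c,d}"
  have singW: "\<forall>g\<in>W. sing k g"
  proof
    fix g assume g: "g \<in> W"
    have gS: "g \<in> S" "g \<noteq> a" "g \<noteq> b" "g \<noteq> c" "g \<noteq> d" using g unfolding W_def by auto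
    show "sing k g" unfolding sing_def
    proof (intro ballI impI)
      fix y assume y: "y \<in> S" "pr k g y"
      show "y = g"
      proof (rule ccontr)
        assume yg: "y \<noteq> g"
        show False
        proof (cases "y \<in> {a,b,c,d}")
          case True
          hence "y = a \<or> y = b \<or> y = c \<or> y = d" by auto
          thus False
          proof (elim disjE)
            assume "y = a" thus False using no3[of g a b k] gS S4 k ab y pab by auto
          next
            assume "y = b" thus False using no3[of g b a k] gS S4 k ab y pba by auto
          next
            assume "y = c" thus False using no3[of g c d k] gS S4 k cd y pcd by auto
          next
            assume "y = d" thus False using no3[of g d c k] gS S4 k cd y pdc by auto
          qed
        next
          case False
          have "g \<notin> {e,f}" "y \<notin> {e,f}" using efin False gS by auto
          thus False using no_disj[of g y e f k l] gS y ef k l yg by auto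
        qed
      qed
    qed
  qed
  have nsing: "\<not> sing k a" "\<not> sing k b" "\<not> sing k c" "\<not> sing k d"
    unfolding sing_def using S4 ab cd pab pba pcd pdc by blast+
  define Qa where "Qa = {w\<in>W. ort k w a}"
  define Qc where "Qc = {w\<in>W. ort k w c}"
  have finW: "finite W" unfolding W_def using fin by simp
  have fins: "finite Qa" "finite Qc" "finite (Pk k)" using finW fin unfolding Qa_def Qc_def Pk_def by auto
  have singW': "\<forall>g\<in>S - {a,b,c,d}. sing k g" using singW unfolding W_def .
  have singW'': "\<forall>g\<in>S - {c,d,a,b}. sing k g" using singW' by (metis insert_commute)
  have QaT: "Qa \<noteq> {} \<Longrightarrow> Qc \<noteq> {}"
  proof -
    assume "Qa \<noteq> {}"
    then obtain w where w: "w \<in> W" "ort k w a" unfolding Qa_def by blast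
    obtain w' where "w' \<in> S - {a,b,c,d}" "ort k w' c"
      using Q_transfer[OF k S4 pab pcd cd singW' _ w(2)] w(1) unfolding W_def by blast
    thus "Qc \<noteq> {}" unfolding Qc_def W_def by blast
  qed
  have QcT: "Qc \<noteq> {} \<Longrightarrow> Qa \<noteq> {}"
  proof -
    assume "Qc \<noteq> {}"
    then obtain w where w: "w \<in> W" "ort k w c" unfolding Qc_def by blast
    have "w \<in> S - {c,d,a,b}" using w(1) unfolding W_def by auto
    then obtain w' where "w' \<in> S - {c,d,a,b}" "ort k w' a"
      using Q_transfer[OF k S4(3,4,1,2) pcd pab ab singW'' _ w(2)] by blast
    thus "Qa \<noteq> {}" unfolding Qa_def W_def by auto
  qed
  have uniqQ: "w' = w" if "w \<in> W" "w' \<in> W" "ort k w z" "ort k w' z" "z \<in> S" for w w' z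
  proof -
    have "pr k w w'" using ort_ort_pr[OF that(3) ort_sym[OF that(4)] that(5) k] .
    thus ?thesis using singW that(1,2) unfolding sing_def W_def by blast
  qed
  have "\<forall>w\<in>Qa. \<forall>w'\<in>Qa. w = w'" unfolding Qa_def using uniqQ[OF _ _ _ _ S4(1)] by blast
  hence cQa: "card Qa \<le> 1" using card_le_Suc0_iff_eq[OF fins(1)] by simp
  have "\<forall>w\<in>Qc. \<forall>w'\<in>Qc. w = w'" unfolding Qc_def using uniqQ[OF _ _ _ _ S4(3)] by blast
  hence cQc: "card Qc \<le> 1" using card_le_Suc0_iff_eq[OF fins(2)] by simp
  have cQ: "card Qa = card Qc"
  proof (cases "Qa = {}")
    case True
    hence "Qc = {}" using QcT by blast
    thus ?thesis using True by simp
  next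
    case False
    hence "Qc \<noteq> {}" using QaT by blast
    hence "card Qc \<noteq> 0" "card Qa \<noteq> 0" using False fins by simp_all
    thus ?thesis using cQa cQc by linarith
  qed
  have dQ: "Qa \<inter> Qc = {}"
  proof (rule ccontr)
    assume "Qa \<inter> Qc \<noteq> {}"
    then obtain w where w: "w \<in> W" "ort k w a" "ort k w c" unfolding Qa_def Qc_def by blast
    have "pr k a c" using ort_ort_pr[OF ort_sym[OF w(2)] w(3) _ k] w(1) unfolding W_def by blast
    thus False using no3[of b a c k] S4 k ab ac bc pba by auto
  qed
  have PW: "Pk k \<subseteq> W" unfolding Pk_def W_def using nsing by auto
  have dP: "Pk k \<inter> (Qa \<union> Qc) = {}"
  proof (rule ccontr)
    assume "Pk k \<inter> (Qa \<union> Qc) \<noteq> {}"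
    then obtain x where x: "x \<in> Pk k" "x \<in> Qa \<union> Qc" by blast
    obtain y where y: "y \<in> S" "ort k x y" "sing k y" using x(1) unfolding Pk_def by blast
    have xS: "x \<in> S" using x(1) unfolding Pk_def by blast
    obtain z where z: "z \<in> {a,c}" "ort k x z" using x(2) unfolding Qa_def Qc_def by blast
    have zS: "z \<in> S" using z S4 by auto
    have "pr k y z" using ort_ort_pr[OF ort_sym[OF y(2)] z(2) xS k] .
    hence "z = y" using y(3) zS unfolding sing_def by blast
    thus False using y(3) z(1) nsing by auto
  qed
  have WU: "W = Pk k \<union> (Qa \<union> Qc)"
  proof
    show "Pk k \<union> (Qa \<union> Qc) \<subseteq> W" using PW unfolding Qa_def Qc_def by blast
    show "W \<subseteq> Pk k \<union> (Qa \<union> Qc)"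
    proof
      fix w assume w: "w \<in> W"
      have wS: "w \<in> S" using w unfolding W_def by blast
      obtain y where y: "y \<in> S" "ort k w y" using partner[OF wS k] by blast
      show "w \<in> Pk k \<union> (Qa \<union> Qc)"
      proof (cases "y \<in> W")
        case True
        hence "w \<in> Pk k" unfolding Pk_def using singW w wS y by blast
        thus ?thesis by blast
      next
        case False
        hence "y = a \<or> y = b \<or> y = c \<or> y = d" using y(1) unfolding W_def by auto
        thus ?thesis
        proof (elim disjE)
          assume "y = a" thus ?thesis using w y unfolding Qa_def by blast
        next
          assume yb: "y = b"
          have "ort k b w" using ort_sym[OF y(2)] yb by simp
          hence "ort k a w" using pr_ort[OF pab _ S4(2) k] by simp
          thus ?thesis using w ort_sym unfolding Qa_def by blast
        next
          assume "y = c" thus ?thesis using w y unfolding Qc_def by blast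
        next
          assume yd: "y = d"
          have "ort k d w" using ort_sym[OF y(2)] yd by simp
          hence "ort k c w" using pr_ort[OF pcd _ S4(4) k] by simp
          thus ?thesis using w ort_sym unfolding Qc_def by blast
        qed
      qed
    qed
  qed
  have cW: "card W = card (Pk k) + card Qa + card Qc"
    unfolding WU using fins dP dQ by (simp add: card_Un_disjoint)
  have "card W = card S - 4" unfolding W_def using S4 fin c4 by (subst card_Diff_subset) auto
  hence "card S = 4 + card (Pk k) + 2 * card Qa" using cW cQ c4 \<open>card {a,b,c,d} \<le> card S\<close> by simp
  hence "even (card S)" using even_P[OF k] by simp
  thus False by (rule even_S_False)
qed

lemma pigeon: assumes x: "x \<in> S" shows "\<exists>k<p. \<exists>y\<in>S. \<exists>z\<in>S. y \<noteq> z \<and> ort k x y \<and> ort k x z"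
proof -
  define g where "g y = (SOME k. k < p \<and> ort k x y)" for y
  have g: "g y < p \<and> ort (g y) x y" if "y \<in> S - {x}" for y
  proof -
    have "\<exists>k. k < p \<and> ort k x y" using orthU[of x y] x that unfolding ort_def by auto
    thus ?thesis unfolding g_def by (rule someI_ex)
  qed
  have "\<not> inj_on g (S - {x})"
  proof
    assume "inj_on g (S - {x})"
    moreover have "g ` (S - {x}) \<subseteq> {..<p}" using g by auto
    ultimately have "card (S - {x}) \<le> card {..<p}" by (intro card_inj_on_le) auto
    moreover have "card (S - {x}) = p + 1" using cardS x fin by simp
    ultimately show False by simp
  qed
  then obtain y z where yz: "y \<in> S - {x}" "z \<in> S - {x}" "g y = g z" "y \<noteq> z"
    unfolding inj_on_def by blast
  show ?thesis using g[OF yz(1)] g[OF yz(2)] yz by (intro exI[of _ "g y"]) auto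
qed

theorem contradiction: False
proof -
  define h where "h x = (SOME k. k < p \<and> (\<exists>y\<in>S. \<exists>z\<in>S. y \<noteq> z \<and> ort k x y \<and> ort k x z))" for x
  have hx: "h x < p \<and> (\<exists>y\<in>S. \<exists>z\<in>S. y \<noteq> z \<and> ort (h x) x y \<and> ort (h x) x z)" if "x \<in> S" for x
    unfolding h_def using pigeon[OF that] by (rule someI_ex)
  have "inj_on h S"
  proof (rule inj_onI)
    fix x x' assume x: "x \<in> S" and x': "x' \<in> S" and e: "h x = h x'"
    define k where "k = h x"
    have k: "k < p" using hx[OF x] unfolding k_def by simp
    obtain y z where yz: "y \<in> S" "z \<in> S" "y \<noteq> z" "ort k x y" "ort k x z" using hx[OF x] unfolding k_def by blast
    obtain y' z' where yz': "y' \<in> S" "z' \<in> S" "y' \<noteq> z'" "ort k x' y'" "ort k x' z'"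
      using hx[OF x'] unfolding k_def e by blast
    have p1: "pr k y z" using ort_ort_pr[OF ort_sym[OF yz(4)] yz(5) x k] .
    have p2: "pr k y' z'" using ort_ort_pr[OF ort_sym[OF yz'(4)] yz'(5) x' k] .
    have eq: "{y,z} = {y',z'}" using one_edge[OF k yz(1,2) yz'(1,2) yz(3) yz'(3) p1 p2] .
    have "y = y' \<or> y = z'" using eq by (metis insertCI insert_iff singletonD)
    hence oy: "ort k x' y" using yz' by auto
    have pxx: "pr k x x'" using ort_ort_pr[OF yz(4) ort_sym[OF oy] yz(1) k] .
    show "x = x'"
    proof (rule ccontr)
      assume ne: "x \<noteq> x'"
      have "{x,x'} = {y,z}" using one_edge[OF k x x' yz(1,2) ne yz(3) pxx p1] .
      hence "x = y \<or> x = z" by (metis insertCI insert_iff singletonD)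
      thus False using yz ort_irrefl x k by auto
    qed
  qed
  moreover have "h ` S \<subseteq> {..<p}" using hx by auto
  ultimately have "card S \<le> card {..<p}" by (intro card_inj_on_le) auto
  thus False using cardS by simp
qed

end



theorem proposition3:
  fixes p :: nat
  assumes "odd p"
  shows "\<not> (\<exists>S. is_UPB p S \<and> card S = p + 2)"
proof
  assume "\<exists>S. is_UPB p S \<and> card S = p + 2"
  then obtain S where U: "is_UPB p S" and c: "card S = p + 2" by blast
  have fin: "finite S" and prod: "\<And>x. x \<in> S \<Longrightarrow> is_product p x"
    and unit: "\<And>x. x \<in> S \<Longrightarrow> qinner p x x = 1"
    and orth: "\<And>x y. x \<in> S \<Longrightarrow> y \<in> S \<Longrightarrow> x \<noteq> y \<Longrightarrow> qinner p x y = 0"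
    and unext: "\<And>z. is_product p z \<Longrightarrow> z \<noteq> (\<lambda>_. 0) \<Longrightarrow> z \<notin> S \<Longrightarrow> \<exists>x\<in>S. qinner p x z \<noteq> 0"
    using U unfolding is_UPB_def by blast+
  define V where "V x = (SOME v. x = tensor p v)" for x
  have V: "x = tensor p (V x)" if "x \<in> S" for x
  proof -
    have "\<exists>v. x = tensor p v" using prod[OF that] unfolding is_product_def .
    thus ?thesis unfolding V_def by (rule someI_ex)
  qed
  have qV: "qinner p x y = (\<Prod>i<p. lin (V x i) (V y i))" if "x \<in> S" "y \<in> S" for x y
    using qinner_tensor[of p "V x" "V y"] V[OF that(1)] V[OF that(2)] by simp
  have "upbd S p V"
  proof (rule upbd.intro)
    show "finite S" "card S = p + 2" "odd p" using fin c assms by auto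
  next
    fix x k assume x: "x \<in> S" and k: "k < p"
    have "(\<Prod>i<p. lin (V x i) (V x i)) \<noteq> 0" using unit[OF x] qV[OF x x] by simp
    hence "lin (V x k) (V x k) \<noteq> 0" using k by simp
    thus "nz (V x k)" unfolding nz_def lin_def by auto
  next
    fix x y assume x: "x \<in> S" and y: "y \<in> S" and ne: "x \<noteq> y"
    have "(\<Prod>i<p. lin (V x i) (V y i)) = 0" using orth[OF x y ne] qV[OF x y] by simp
    thus "\<exists>k<p. lin (V x k) (V y k) = 0" by auto
  next
    fix w assume nzw: "\<And>k. k < p \<Longrightarrow> nz (w k)"
      and cov: "\<And>x. x \<in> S \<Longrightarrow> \<exists>k<p. lin (V x k) (w k) = 0"
    define z where "z = tensor p w"
    have z0: "qinner p x z = 0" if x: "x \<in> S" for x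
    proof -
      have "qinner p x z = (\<Prod>i<p. lin (V x i) (w i))"
        unfolding z_def using qinner_tensor[of p "V x" w] V[OF x] by simp
      also have "\<dots> = 0" using cov[OF x] by auto
      finally show ?thesis .
    qed
    have "is_product p z" unfolding z_def is_product_def by blast
    moreover have "z \<noteq> (\<lambda>_. 0)" unfolding z_def using tensor_nonzero nzw by blast
    moreover have "z \<notin> S"
    proof
      assume "z \<in> S" thus False using z0 unit by force
    qed
    ultimately obtain x where "x \<in> S" "qinner p x z \<noteq> 0" using unext by blast
    thus False using z0 by blast
  qed
  thus False by (rule upbd.contradiction)
qed


end
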